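(* Let $I\in\mathbb{I}_{m,n}$ and let $J\in\mathrm{Cov}(I)$. Then $\#J_0=\#I_0+1$. Consequently $\mathbb{I}_{m,n}$ is a graded poset with rank function $I\mapsto \#I_0$.
   Context: Fix a field $K$. For integers $m,n\ge1$, $G_{m,n}$ is the equioriented commutative $m\times n$ grid: the quiver with vertex set $\{(i,j):1\le i\le m,\ 1\le j\le n\}$ and arrows $(i,j)\to(i,j+1)$ and $(i,j)\to(i+1,j)$, bound by all commutativity relations. An interval of $G_{m,n}$ is a nonempty full subquiver $I$ which is connected (as an undirected graph) and convex (whenever $x,y\in I_0$ and there are paths $x\to z$ and $z\to y$ in $G_{m,n}$, then $z\in I_0$); $I_0$ denotes its vertex set. $\mathbb{I}_{m,n}$ is the set of intervals, partially ordered by $I\le J\iff I_0\subseteq J_0$. $\mathrm{Cov}(I)$ is the set of $J\in\mathbb{I}_{m,n}$ covering $I$, i.e. $I<J$ and there is no interval strictly between $I$ and $J$. *)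

theory Defs
  imports Main
begin

definition grid_vertices :: "nat \<Rightarrow> nat \<Rightarrow> (nat \<times> nat) set" where
  "grid_vertices m n = {(i, j). 1 \<le> i \<and> i \<le> m \<and> 1 \<le> j \<and> j \<le> n}"

definition grid_arrow :: "nat \<Rightarrow> nat \<Rightarrow> nat \<times> nat \<Rightarrow> nat \<times> nat \<Rightarrow> bool" where
  "grid_arrow m n x y \<longleftrightarrow> x \<in> grid_vertices m n \<and> y \<in> grid_vertices m n \<and>
     ((fst y = fst x \<and> snd y = snd x + 1) \<or> (fst y = fst x + 1 \<and> snd y = snd x))"

definition grid_path :: "nat \<Rightarrow> nat \<Rightarrow> nat \<times> nat \<Rightarrow> nat \<times> nat \<Rightarrow> bool" where
  "grid_path m n x y \<longleftrightarrow> x \<in> grid_vertices m n \<and> (grid_arrow m n)\<^sup>*\<^sup>* x y"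

definition full_connected :: "nat \<Rightarrow> nat \<Rightarrow> (nat \<times> nat) set \<Rightarrow> bool" where
  "full_connected m n S \<longleftrightarrow>
     (\<forall>x\<in>S. \<forall>y\<in>S. (\<lambda>a b. a \<in> S \<and> b \<in> S \<and> (grid_arrow m n a b \<or> grid_arrow m n b a))\<^sup>*\<^sup>* x y)"

definition convex_set :: "nat \<Rightarrow> nat \<Rightarrow> (nat \<times> nat) set \<Rightarrow> bool" where
  "convex_set m n S \<longleftrightarrow>
     (\<forall>x\<in>S. \<forall>y\<in>S. \<forall>z. grid_path m n x z \<and> grid_path m n z y \<longrightarrow> z \<in> S)"

text \<open>Intervals of G_{m,n}, identified with their vertex sets I_0 (a full
  subquiver is determined by its vertex set).\<close>
definition is_interval :: "nat \<Rightarrow> nat \<Rightarrow> (nat \<times> nat) set \<Rightarrow> bool" where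
  "is_interval m n S \<longleftrightarrow> S \<noteq> {} \<and> S \<subseteq> grid_vertices m n \<and>
     full_connected m n S \<and> convex_set m n S"

definition intervals :: "nat \<Rightarrow> nat \<Rightarrow> (nat \<times> nat) set set" where
  "intervals m n = {S. is_interval m n S}"

definition Cov :: "nat \<Rightarrow> nat \<Rightarrow> (nat \<times> nat) set \<Rightarrow> (nat \<times> nat) set set" where
  "Cov m n I = {J \<in> intervals m n. I \<subset> J \<and> \<not> (\<exists>K \<in> intervals m n. I \<subset> K \<and> K \<subset> J)}"

end

theory Submission
  imports Defs
begin

lemma arrow_iff: "grid_arrow m n a b \<longleftrightarrow> a \<in> grid_vertices m n \<and> b \<in> grid_vertices m n \<and>
   (b = (fst a, snd a + 1) \<or> b = (fst a + 1, snd a))"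
  unfolding grid_arrow_def by (cases a; cases b) auto

lemma path_imp: "(grid_arrow m n)\<^sup>*\<^sup>* x y \<Longrightarrow> x \<in> grid_vertices m n \<Longrightarrow>
   y \<in> grid_vertices m n \<and> fst x \<le> fst y \<and> snd x \<le> snd y"
  by (induction rule: rtranclp_induct) (auto simp: grid_arrow_def)

lemma imp_path:
  assumes "x \<in> grid_vertices m n" "y \<in> grid_vertices m n" "fst x \<le> fst y" "snd x \<le> snd y"
  shows "(grid_arrow m n)\<^sup>*\<^sup>* x y"
  using assms
proof (induction "(fst y - fst x) + (snd y - snd x)" arbitrary: y)
  case 0
  then have "y = x" by (simp add: prod_eq_iff)
  then show ?case by simp
next
  case (Suc k)
  show ?case
  proof (cases "fst x < fst y")
    case True
    define y' where "y' = (fst y - 1, snd y)"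
    have g: "y' \<in> grid_vertices m n" using Suc.prems True
      by (auto simp: y'_def grid_vertices_def)
    have "(grid_arrow m n)\<^sup>*\<^sup>* x y'"
      by (rule Suc.hyps) (use Suc.prems Suc.hyps(2) True g in \<open>auto simp: y'_def\<close>)
    moreover have "grid_arrow m n y' y" using g Suc.prems True
      by (auto simp: arrow_iff y'_def prod_eq_iff)
    ultimately show ?thesis by (rule rtranclp.rtrancl_into_rtrancl)
  next
    case False
    then have T: "snd x < snd y" using Suc.hyps(2) Suc.prems by auto
    define y' where "y' = (fst y, snd y - 1)"
    have g: "y' \<in> grid_vertices m n" using Suc.prems T
      by (auto simp: y'_def grid_vertices_def)
    have "(grid_arrow m n)\<^sup>*\<^sup>* x y'"
      by (rule Suc.hyps) (use Suc.prems Suc.hyps(2) T False g in \<open>auto simp: y'_def\<close>)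
    moreover have "grid_arrow m n y' y" using g Suc.prems T
      by (auto simp: arrow_iff y'_def prod_eq_iff)
    ultimately show ?thesis by (rule rtranclp.rtrancl_into_rtrancl)
  qed
qed

lemma gp_iff: "grid_path m n x y \<longleftrightarrow> x \<in> grid_vertices m n \<and> y \<in> grid_vertices m n \<and>
   fst x \<le> fst y \<and> snd x \<le> snd y"
  unfolding grid_path_def using path_imp imp_path by blast

lemma finite_grid: "finite (grid_vertices m n)"
proof -
  have "grid_vertices m n \<subseteq> {1..m} \<times> {1..n}" by (auto simp: grid_vertices_def)
  then show ?thesis by (rule finite_subset) auto
qed

lemma step_out:
  assumes "R\<^sup>*\<^sup>* a b" "P a" "\<not> P b"
  shows "\<exists>u w. R u w \<and> P u \<and> \<not> P w"
  using assms by (induction rule: rtranclp_induct) auto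

lemma conn_insert:
  assumes "full_connected m n I" "p \<in> I" "grid_arrow m n p v \<or> grid_arrow m n v p"
  shows "full_connected m n (insert v I)"
proof -
  let ?R = "\<lambda>S a b. a \<in> S \<and> b \<in> S \<and> (grid_arrow m n a b \<or> grid_arrow m n b a)"
  have mono: "(?R I)\<^sup>*\<^sup>* a b \<Longrightarrow> (?R (insert v I))\<^sup>*\<^sup>* a b" for a b
    using mono_rtranclp[of "?R I" "?R (insert v I)"] by blast
  have vp: "(?R (insert v I))\<^sup>*\<^sup>* v p" "(?R (insert v I))\<^sup>*\<^sup>* p v"
    using assms(2,3) by (auto intro!: r_into_rtranclp)
  show ?thesis unfolding full_connected_def
  proof (intro ballI)
    fix x y assume x: "x \<in> insert v I" and y: "y \<in> insert v I"
    have pi: "\<And>z. z \<in> I \<Longrightarrow> (?R (insert v I))\<^sup>*\<^sup>* p z \<and> (?R (insert v I))\<^sup>*\<^sup>* z p"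
      using assms(1,2) mono unfolding full_connected_def by blast
    show "(?R (insert v I))\<^sup>*\<^sup>* x y"
    proof (cases "x = v")
      case True
      show ?thesis
      proof (cases "y = v")
        case True with \<open>x = v\<close> show ?thesis by simp
      next
        case False
        then have "y \<in> I" using y by simp
        then show ?thesis using vp(1) pi True by (meson rtranclp_trans)
      qed
    next
      case False
      then have xI: "x \<in> I" using x by simp
      show ?thesis
      proof (cases "y = v")
        case True
        then show ?thesis using vp(2) pi xI by (meson rtranclp_trans)
      next
        case False
        then have "y \<in> I" using y by simp
        then show ?thesis using pi xI by (meson rtranclp_trans)
      qed
    qed
  qed
qed

lemma convex_iff:
  assumes "S \<subseteq> grid_vertices m n"
  shows "convex_set m n S \<longleftrightarrow> (\<forall>x\<in>S. \<forall>y\<in>S. \<forall>z\<in>grid_vertices m n.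
     fst x \<le> fst z \<and> fst z \<le> fst y \<and> snd x \<le> snd z \<and> snd z \<le> snd y \<longrightarrow> z \<in> S)"
  using assms unfolding convex_set_def gp_iff by blast

lemma extend_A:
  fixes I J :: "(nat \<times> nat) set"
  assumes I: "is_interval m n I" and J: "is_interval m n J" and IJ: "I \<subseteq> J"
    and A: "A = {d \<in> J - I. \<exists>x\<in>I. fst x \<le> fst d \<and> snd x \<le> snd d}" and Ane: "A \<noteq> {}"
  shows "\<exists>v \<in> J - I. is_interval m n (insert v I)"
proof -
  let ?G = "grid_vertices m n"
  have IG: "I \<subseteq> ?G" and JG: "J \<subseteq> ?G" using I J by (auto simp: is_interval_def)
  have cI: "\<And>x y z. x \<in> I \<Longrightarrow> y \<in> I \<Longrightarrow> z \<in> ?G \<Longrightarrow> fst x \<le> fst z \<Longrightarrow> fst z \<le> fst y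
     \<Longrightarrow> snd x \<le> snd z \<Longrightarrow> snd z \<le> snd y \<Longrightarrow> z \<in> I"
    using I IG convex_iff[of I m n] unfolding is_interval_def by blast
  have cJ: "\<And>x y z. x \<in> J \<Longrightarrow> y \<in> J \<Longrightarrow> z \<in> ?G \<Longrightarrow> fst x \<le> fst z \<Longrightarrow> fst z \<le> fst y
     \<Longrightarrow> snd x \<le> snd z \<Longrightarrow> snd z \<le> snd y \<Longrightarrow> z \<in> J"
    using J JG convex_iff[of J m n] unfolding is_interval_def by blast
  have finA: "finite A" using A JG finite_grid by (metis (no_types, lifting) finite_subset mem_Collect_eq subsetI Diff_iff subsetD)
  define s where "s = (\<lambda>d::nat\<times>nat. fst d + snd d)"
  obtain v where vA: "v \<in> A" and vmin: "\<And>d. d \<in> A \<Longrightarrow> s v \<le> s d"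
  proof -
    have "Min (s ` A) \<in> s ` A" using finA Ane by simp
    then obtain v where "v \<in> A" "s v = Min (s ` A)" by auto
    then show ?thesis using that finA by auto
  qed
  from vA A obtain x where vJ: "v \<in> J" and vI: "v \<notin> I" and xI: "x \<in> I"
    and xv: "fst x \<le> fst v" "snd x \<le> snd v" by auto
  have vG: "v \<in> ?G" using vJ JG by auto
  have xG: "x \<in> ?G" using xI IG by auto
  have xJ: "x \<in> J" using xI IJ by auto
  have "x \<noteq> v" using xI vI by auto
  obtain p where pG: "p \<in> ?G" and xp: "fst x \<le> fst p" "snd x \<le> snd p"
    and pv: "grid_arrow m n p v" and spv: "s p < s v" and pv2: "fst p \<le> fst v" "snd p \<le> snd v"
  proof (cases "fst x < fst v")
    case True
    define p where "p = (fst v - 1, snd v)"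
    have "p \<in> ?G" using True xG vG by (auto simp: p_def grid_vertices_def)
    moreover have "grid_arrow m n p v" using \<open>p \<in> ?G\<close> vG True by (auto simp: arrow_iff p_def prod_eq_iff)
    ultimately show ?thesis using that[of p] True xv by (auto simp: p_def s_def)
  next
    case False
    then have T: "snd x < snd v" using xv \<open>x \<noteq> v\<close> by (auto simp: prod_eq_iff)
    define p where "p = (fst v, snd v - 1)"
    have "p \<in> ?G" using T xG vG by (auto simp: p_def grid_vertices_def)
    moreover have "grid_arrow m n p v" using \<open>p \<in> ?G\<close> vG T by (auto simp: arrow_iff p_def prod_eq_iff)
    ultimately show ?thesis using that[of p] T xv by (auto simp: p_def s_def)
  qed
  have pJ: "p \<in> J" using cJ[OF xJ vJ pG] xp pv2 by auto
  have pI: "p \<in> I"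
  proof (rule ccontr)
    assume "p \<notin> I"
    then have "p \<in> A" using A pJ xI xp by auto
    then show False using vmin spv by fastforce
  qed
  have conn: "full_connected m n (insert v I)"
    using conn_insert[of m n I p v] I pI pv unfolding is_interval_def by blast
  have conv: "convex_set m n (insert v I)"
    unfolding convex_iff[of "insert v I", OF insert_subsetI[OF vG IG]]
  proof (intro ballI impI)
    fix a b z assume a: "a \<in> insert v I" and b: "b \<in> insert v I" and zG: "z \<in> ?G"
      and le: "fst a \<le> fst z \<and> fst z \<le> fst b \<and> snd a \<le> snd z \<and> snd z \<le> snd b"
    show "z \<in> insert v I"
    proof (cases "a = v")
      case True
      show ?thesis
      proof (cases "b = v")
        case True
        then show ?thesis using \<open>a = v\<close> le by (auto simp: prod_eq_iff)
      next
        case False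
        then have "b \<in> I" using b by auto
        then have "v \<in> I" using cI[OF xI \<open>b \<in> I\<close> vG] xv le \<open>a = v\<close> by auto
        then show ?thesis using vI by auto
      qed
    next
      case False
      then have aI: "a \<in> I" using a by auto
      show ?thesis
      proof (cases "b = v")
        case False
        then have "b \<in> I" using b by auto
        then show ?thesis using cI[OF aI _ zG] le by auto
      next
        case True
        show ?thesis
        proof (rule ccontr)
          assume zn: "z \<notin> insert v I"
          have "z \<in> J" using cJ[of a v z] aI IJ vJ zG le True by auto
          then have "z \<in> A" using A zn aI le by auto
          moreover have "s z < s v" using le True zn by (auto simp: s_def prod_eq_iff)
          ultimately show False using vmin by fastforce
        qed
      qed
    qed
  qed
  have "is_interval m n (insert v I)"
    using conn conv vG IG unfolding is_interval_def by auto
  then show ?thesis using vJ vI by auto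
qed

lemma extend_B:
  fixes I J :: "(nat \<times> nat) set"
  assumes I: "is_interval m n I" and J: "is_interval m n J" and IJ: "I \<subseteq> J"
    and B: "B = {d \<in> J - I. \<exists>y\<in>I. fst d \<le> fst y \<and> snd d \<le> snd y}" and Bne: "B \<noteq> {}"
  shows "\<exists>v \<in> J - I. is_interval m n (insert v I)"
proof -
  let ?G = "grid_vertices m n"
  have IG: "I \<subseteq> ?G" and JG: "J \<subseteq> ?G" using I J by (auto simp: is_interval_def)
  have cI: "\<And>x y z. x \<in> I \<Longrightarrow> y \<in> I \<Longrightarrow> z \<in> ?G \<Longrightarrow> fst x \<le> fst z \<Longrightarrow> fst z \<le> fst y
     \<Longrightarrow> snd x \<le> snd z \<Longrightarrow> snd z \<le> snd y \<Longrightarrow> z \<in> I"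
    using I IG convex_iff[of I m n] unfolding is_interval_def by blast
  have cJ: "\<And>x y z. x \<in> J \<Longrightarrow> y \<in> J \<Longrightarrow> z \<in> ?G \<Longrightarrow> fst x \<le> fst z \<Longrightarrow> fst z \<le> fst y
     \<Longrightarrow> snd x \<le> snd z \<Longrightarrow> snd z \<le> snd y \<Longrightarrow> z \<in> J"
    using J JG convex_iff[of J m n] unfolding is_interval_def by blast
  have finB: "finite B" using B JG finite_grid by (metis (no_types, lifting) finite_subset mem_Collect_eq subsetI Diff_iff subsetD)
  define s where "s = (\<lambda>d::nat\<times>nat. fst d + snd d)"
  obtain v where vB: "v \<in> B" and vmax: "\<And>d. d \<in> B \<Longrightarrow> s d \<le> s v"
  proof -
    have "Max (s ` B) \<in> s ` B" using finB Bne by simp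
    then obtain v where "v \<in> B" "s v = Max (s ` B)" by auto
    then show ?thesis using that finB by auto
  qed
  from vB B obtain y where vJ: "v \<in> J" and vI: "v \<notin> I" and yI: "y \<in> I"
    and vy: "fst v \<le> fst y" "snd v \<le> snd y" by auto
  have vG: "v \<in> ?G" using vJ JG by auto
  have yG: "y \<in> ?G" using yI IG by auto
  have yJ: "y \<in> J" using yI IJ by auto
  have "y \<noteq> v" using yI vI by auto
  obtain p where pG: "p \<in> ?G" and py: "fst p \<le> fst y" "snd p \<le> snd y"
    and vp: "grid_arrow m n v p" and spv: "s v < s p" and vp2: "fst v \<le> fst p" "snd v \<le> snd p"
  proof (cases "fst v < fst y")
    case True
    define p where "p = (fst v + 1, snd v)"
    have "p \<in> ?G" using True yG vG by (auto simp: p_def grid_vertices_def)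
    moreover have "grid_arrow m n v p" using \<open>p \<in> ?G\<close> vG True by (auto simp: arrow_iff p_def prod_eq_iff)
    ultimately show ?thesis using that[of p] True vy by (auto simp: p_def s_def)
  next
    case False
    then have T: "snd v < snd y" using vy \<open>y \<noteq> v\<close> by (auto simp: prod_eq_iff)
    define p where "p = (fst v, snd v + 1)"
    have "p \<in> ?G" using T yG vG by (auto simp: p_def grid_vertices_def)
    moreover have "grid_arrow m n v p" using \<open>p \<in> ?G\<close> vG T by (auto simp: arrow_iff p_def prod_eq_iff)
    ultimately show ?thesis using that[of p] T vy by (auto simp: p_def s_def)
  qed
  have pJ: "p \<in> J" using cJ[OF vJ yJ pG] py vp2 by auto
  have pI: "p \<in> I"
  proof (rule ccontr)
    assume "p \<notin> I"
    then have "p \<in> B" using B pJ yI py by auto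
    then show False using vmax spv by fastforce
  qed
  have conn: "full_connected m n (insert v I)"
    using conn_insert[of m n I p v] I pI vp unfolding is_interval_def by blast
  have conv: "convex_set m n (insert v I)"
    unfolding convex_iff[of "insert v I", OF insert_subsetI[OF vG IG]]
  proof (intro ballI impI)
    fix a b z assume a: "a \<in> insert v I" and b: "b \<in> insert v I" and zG: "z \<in> ?G"
      and le: "fst a \<le> fst z \<and> fst z \<le> fst b \<and> snd a \<le> snd z \<and> snd z \<le> snd b"
    show "z \<in> insert v I"
    proof (cases "b = v")
      case True
      show ?thesis
      proof (cases "a = v")
        case True
        then show ?thesis using \<open>b = v\<close> le by (auto simp: prod_eq_iff)
      next
        case False
        then have "a \<in> I" using a by auto
        then have "v \<in> I" using cI[OF \<open>a \<in> I\<close> yI vG] vy le \<open>b = v\<close> by auto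
        then show ?thesis using vI by auto
      qed
    next
      case False
      then have bI: "b \<in> I" using b by auto
      show ?thesis
      proof (cases "a = v")
        case False
        then have "a \<in> I" using a by auto
        then show ?thesis using cI[OF _ bI zG] le by auto
      next
        case True
        show ?thesis
        proof (rule ccontr)
          assume zn: "z \<notin> insert v I"
          have "z \<in> J" using cJ[of v b z] bI IJ vJ zG le True by auto
          then have "z \<in> B" using B zn bI le by auto
          moreover have "s v < s z" using le True zn by (auto simp: s_def prod_eq_iff)
          ultimately show False using vmax by fastforce
        qed
      qed
    qed
  qed
  have "is_interval m n (insert v I)"
    using conn conv vG IG unfolding is_interval_def by auto
  then show ?thesis using vJ vI by auto
qed

lemma extend:
  assumes I: "is_interval m n I" and J: "is_interval m n J" and IJ: "I \<subset> J"
  shows "\<exists>v \<in> J - I. is_interval m n (insert v I)"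
proof -
  define A where "A = {d \<in> J - I. \<exists>x\<in>I. fst x \<le> fst d \<and> snd x \<le> snd d}"
  define B where "B = {d \<in> J - I. \<exists>y\<in>I. fst d \<le> fst y \<and> snd d \<le> snd y}"
  let ?R = "\<lambda>a b. a \<in> J \<and> b \<in> J \<and> (grid_arrow m n a b \<or> grid_arrow m n b a)"
  obtain x where xI: "x \<in> I" using I unfolding is_interval_def by auto
  obtain d where dJ: "d \<in> J" "d \<notin> I" using IJ by auto
  have "?R\<^sup>*\<^sup>* x d" using J xI IJ dJ unfolding is_interval_def full_connected_def by blast
  then obtain u w where uw: "?R u w" "u \<in> I" "w \<notin> I"
    using step_out[of ?R x d "\<lambda>a. a \<in> I"] xI dJ by blast
  have "A \<noteq> {} \<or> B \<noteq> {}"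
  proof (cases "grid_arrow m n u w")
    case True
    then have "w \<in> A" using uw unfolding A_def by (auto simp: arrow_iff intro!: bexI[of _ u])
    then show ?thesis by auto
  next
    case False
    then have "grid_arrow m n w u" using uw by auto
    then have "w \<in> B" using uw unfolding B_def by (auto simp: arrow_iff intro!: bexI[of _ u])
    then show ?thesis by auto
  qed
  then show ?thesis
    using extend_A[OF I J _ A_def] extend_B[OF I J _ B_def] IJ by blast
qed

lemma singleton_interval:
  assumes "x \<in> grid_vertices m n"
  shows "is_interval m n {x}"
  using assms unfolding is_interval_def full_connected_def convex_set_def gp_iff
  by (auto simp: prod_eq_iff)

theorem mainTheorem2:
  fixes m n :: nat
  assumes "1 \<le> m" and "1 \<le> n"
  shows "(\<forall>I \<in> intervals m n. \<forall>J \<in> Cov m n I. card J = card I + 1)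
    \<and> (\<forall>I \<in> intervals m n. (\<not> (\<exists>K \<in> intervals m n. K \<subset> I)) \<longrightarrow> card I = 1)"
proof (intro conjI ballI impI)
  fix I J assume I: "I \<in> intervals m n" and J: "J \<in> Cov m n I"
  have Ii: "is_interval m n I" using I by (simp add: intervals_def)
  have Ji: "is_interval m n J" and IJ: "I \<subset> J"
    and nK: "\<not> (\<exists>K \<in> intervals m n. I \<subset> K \<and> K \<subset> J)"
    using J by (auto simp: Cov_def intervals_def)
  obtain v where v: "v \<in> J - I" and K: "is_interval m n (insert v I)"
    using extend[OF Ii Ji IJ] by blast
  have "insert v I \<subseteq> J" using v IJ by auto
  moreover have "I \<subset> insert v I" using v by auto
  ultimately have "insert v I = J" using nK K by (auto simp: intervals_def)
  moreover have "finite I" using Ii finite_grid unfolding is_interval_def by (meson finite_subset)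
  ultimately show "card J = card I + 1" using v by auto
next
  fix I assume I: "I \<in> intervals m n" and nK: "\<not> (\<exists>K \<in> intervals m n. K \<subset> I)"
  have Ii: "is_interval m n I" using I by (simp add: intervals_def)
  obtain x where xI: "x \<in> I" using Ii unfolding is_interval_def by auto
  have "x \<in> grid_vertices m n" using Ii xI unfolding is_interval_def by auto
  then have "{x} \<in> intervals m n" using singleton_interval by (simp add: intervals_def)
  then have "\<not> {x} \<subset> I" using nK by blast
  then have "I = {x}" using xI by auto
  then show "card I = 1" by simp
qed

end
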